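(* Any finite union of rational convex polyhedra of positive codimension in $\mathbb{R}^n$ (in particular, the union of all cells of any rational polyhedral complex all of whose cells have positive codimension) coincides with a tropical prevariety in $\mathbb{R}^n$.
   Context: A rational convex polyhedron is a set defined by finitely many linear equations and non-strict linear inequalities with integer coefficients. A tropical polynomial $f$ in $n$ variables is a function $f(x)=\min\{L_1(x),\dots,L_m(x)\}$ on $\mathbb{R}^n$, where each $L_j(x)=\sum_{i=1}^n a_{ji}x_i+b_j$ has non-negative integer coefficients $a_{ji}$ and real constant term $b_j$. The tropical hypersurface $V(f)$ is the set of points where this piecewise-linear function is not smooth. A tropical prevariety is a set of the form $V(f_1)\cap\cdots\cap V(f_k)$ for finitely many tropical polynomials. *)

theory Defs
  imports "HOL-Analysis.Analysis"
begin

definition rational_polyhedron :: "(real ^ 'n) set \<Rightarrow> bool" where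
  "rational_polyhedron P \<longleftrightarrow>
     (\<exists>E I :: ((int ^ 'n) \<times> int) set. finite E \<and> finite I \<and>
        P = {x. (\<forall>(a, b) \<in> E. (\<Sum>i\<in>UNIV. of_int (a $ i) * x $ i) = of_int b) \<and>
                (\<forall>(a, b) \<in> I. (\<Sum>i\<in>UNIV. of_int (a $ i) * x $ i) \<le> of_int b)})"

text \<open>A tropical polynomial is given by a finite nonempty set of terms (a, b), with
exponent vector a of non-negative integers and real constant b; it denotes
x \<mapsto> min over terms of (a \<bullet> x + b).\<close>
definition tropical_polynomial :: "((nat ^ 'n) \<times> real) set \<Rightarrow> bool" where
  "tropical_polynomial T \<longleftrightarrow> finite T \<and> T \<noteq> {}"

definition trop_eval :: "((nat ^ 'n) \<times> real) set \<Rightarrow> real ^ 'n \<Rightarrow> real" where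
  "trop_eval T x = Min ((\<lambda>(a, b). (\<Sum>i\<in>UNIV. real (a $ i) * x $ i) + b) ` T)"

definition trop_hypersurface :: "((nat ^ 'n) \<times> real) set \<Rightarrow> (real ^ 'n) set" where
  "trop_hypersurface T = {x. \<not> (trop_eval T differentiable (at x))}"

definition tropical_prevariety :: "(real ^ 'n) set \<Rightarrow> bool" where
  "tropical_prevariety S \<longleftrightarrow>
     (\<exists>F :: ((nat ^ 'n) \<times> real) set set. finite F \<and> (\<forall>T\<in>F. tropical_polynomial T) \<and>
        S = (\<Inter>T\<in>F. trop_hypersurface T))"

end

theory Submission
  imports Defs
begin


definition va :: "nat^'n \<Rightarrow> real^'n" where "va a = (\<chi> i. real (a $ i))"
definition tev :: "(nat^'n) \<times> real \<Rightarrow> real^'n \<Rightarrow> real" where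
  "tev t x = va (fst t) \<bullet> x + snd t"

lemma trop_eval_tev: "trop_eval T x = Min ((\<lambda>t. tev t x) ` T)"
  unfolding trop_eval_def tev_def va_def
  by (rule arg_cong[where f=Min], auto simp: inner_vec_def mult.commute split: prod.splits intro!: image_cong)

lemma te_le: "finite T \<Longrightarrow> t \<in> T \<Longrightarrow> trop_eval T x \<le> tev t x"
  unfolding trop_eval_tev by simp

lemma te_ex: "finite T \<Longrightarrow> T \<noteq> {} \<Longrightarrow> \<exists>t\<in>T. tev t x = trop_eval T x"
proof -
  assume "finite T" "T \<noteq> {}"
  then have "Min ((\<lambda>t. tev t x) ` T) \<in> (\<lambda>t. tev t x) ` T" by (intro Min_in) auto
  then show ?thesis unfolding trop_eval_tev by force
qed

lemma tev_deriv: "((\<lambda>y. tev t y) has_derivative (\<lambda>v. va (fst t) \<bullet> v)) F"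
  unfolding tev_def
  by (auto intro!: derivative_eq_intros)

lemma va_inj: "va a = va b \<Longrightarrow> a = b"
  by (simp add: va_def vec_eq_iff)

lemma char:
  assumes "tropical_polynomial T"
  shows "x \<in> trop_hypersurface T \<longleftrightarrow>
    (\<exists>s\<in>T. \<exists>t\<in>T. tev s x = trop_eval T x \<and> tev t x = trop_eval T x \<and> fst s \<noteq> fst t)"
proof -
  have fin: "finite T" and ne: "T \<noteq> {}" using assms by (auto simp: tropical_polynomial_def)
  let ?f = "trop_eval T"
  have A: "D = (\<lambda>v. va (fst s) \<bullet> v)" if D: "(?f has_derivative D) (at x)" and s: "s \<in> T" "tev s x = ?f x" for D s
  proof -
    have "((\<lambda>y. ?f y - tev s y) has_derivative (\<lambda>v. D v - va (fst s) \<bullet> v)) (at x)"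
      by (intro has_derivative_diff D tev_deriv)
    moreover have "\<forall>y\<in>UNIV. ?f y - tev s y \<le> ?f x - tev s x"
      using te_le[OF fin s(1)] s(2) by auto
    ultimately have "(\<lambda>v. D v - va (fst s) \<bullet> v) = (\<lambda>v. 0)"
      by (intro differential_zero_maxmin[of x UNIV]) auto
    then show ?thesis by (metis eq_iff_diff_eq_0)
  qed
  show ?thesis
  proof
    assume "x \<in> trop_hypersurface T"
    then have nd: "\<not> (?f differentiable (at x))" by (simp add: trop_hypersurface_def)
    show "\<exists>s\<in>T. \<exists>t\<in>T. tev s x = ?f x \<and> tev t x = ?f x \<and> fst s \<noteq> fst t"
    proof (rule ccontr)
      assume nc: "\<not> ?thesis"
      obtain t0 where t0: "t0 \<in> T" "tev t0 x = ?f x" using te_ex[OF fin ne] by blast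
      have ev: "\<forall>\<^sub>F y in at x. tev t0 y \<le> tev s y" if s: "s \<in> T" for s
      proof (cases "tev s x = ?f x")
        case True
        then have "fst s = fst t0" using nc s t0 by blast
        moreover then have "snd s = snd t0" using True t0 by (simp add: tev_def)
        ultimately show ?thesis by (simp add: tev_def)
      next
        case False
        then have "tev s x > tev t0 x" using te_le[OF fin s, of x] t0 by auto
        moreover have "((\<lambda>y. tev s y - tev t0 y) \<longlongrightarrow> tev s x - tev t0 x) (at x)"
          unfolding tev_def by (intro tendsto_intros)
        ultimately have "\<forall>\<^sub>F y in at x. 0 < tev s y - tev t0 y"
          by (intro order_tendstoD(1)) auto
        then show ?thesis by eventually_elim auto
      qed
      have "\<forall>\<^sub>F y in at x. \<forall>s\<in>T. tev t0 y \<le> tev s y"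
        using ev fin by (simp add: eventually_ball_finite)
      then have "\<forall>\<^sub>F y in at x. tev t0 y = ?f y"
      proof eventually_elim
        case (elim y)
        then show ?case unfolding trop_eval_tev using t0(1) fin
          by (intro Min_eqI[symmetric]) auto
      qed
      then have "(?f has_derivative (\<lambda>v. va (fst t0) \<bullet> v)) (at x)"
        using t0 by (intro has_derivative_transform_eventually[OF tev_deriv]) auto
      then show False using nd by (auto simp: differentiable_def)
    qed
  next
    assume "\<exists>s\<in>T. \<exists>t\<in>T. tev s x = ?f x \<and> tev t x = ?f x \<and> fst s \<noteq> fst t"
    then obtain s t where st: "s \<in> T" "t \<in> T" "tev s x = ?f x" "tev t x = ?f x" "fst s \<noteq> fst t" by blast
    show "x \<in> trop_hypersurface T"
    proof (rule ccontr)
      assume "x \<notin> trop_hypersurface T"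
      then obtain D where D: "(?f has_derivative D) (at x)"
        by (auto simp: trop_hypersurface_def differentiable_def)
      have "(\<lambda>v. va (fst s) \<bullet> v) = (\<lambda>v. va (fst t) \<bullet> v)" using A[OF D st(1,3)] A[OF D st(2,4)] by simp
      then have "va (fst s) \<bullet> (va (fst s) - va (fst t)) = va (fst t) \<bullet> (va (fst s) - va (fst t))"
        by metis
      then have "(va (fst s) - va (fst t)) \<bullet> (va (fst s) - va (fst t)) = 0"
        by (simp only: inner_diff_left)
      then have "va (fst s) = va (fst t)" by simp
      then show False using va_inj st(5) by blast
    qed
  qed
qed

definition tprod :: "((nat^'n) \<times> real) set \<Rightarrow> ((nat^'n) \<times> real) set \<Rightarrow> ((nat^'n) \<times> real) set" where
  "tprod f g = (\<lambda>(s,t). (fst s + fst t, snd s + snd t)) ` (f \<times> g)"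

lemma va_add: "va (a + b) = va a + va b"
  by (simp add: va_def vec_eq_iff)

lemma tev_add: "tev (fst s + fst t, snd s + snd t) x = tev s x + tev t x"
  by (simp add: tev_def va_add inner_add_left)

lemma tprod_poly: "tropical_polynomial f \<Longrightarrow> tropical_polynomial g \<Longrightarrow> tropical_polynomial (tprod f g)"
  by (auto simp: tropical_polynomial_def tprod_def)

lemma tprod_eval:
  assumes f: "tropical_polynomial f" and g: "tropical_polynomial g"
  shows "trop_eval (tprod f g) x = trop_eval f x + trop_eval g x"
proof -
  have ff: "finite f" "f \<noteq> {}" and gg: "finite g" "g \<noteq> {}" using f g by (auto simp: tropical_polynomial_def)
  obtain s0 where s0: "s0 \<in> f" "tev s0 x = trop_eval f x" using te_ex[OF ff] by blast
  obtain t0 where t0: "t0 \<in> g" "tev t0 x = trop_eval g x" using te_ex[OF gg] by blast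
  show ?thesis unfolding trop_eval_tev[of "tprod f g"]
  proof (rule Min_eqI)
    show "finite ((\<lambda>t. tev t x) ` tprod f g)" using ff gg by (simp add: tprod_def)
    fix y assume "y \<in> (\<lambda>t. tev t x) ` tprod f g"
    then obtain s t where st: "s \<in> f" "t \<in> g" "y = tev (fst s + fst t, snd s + snd t) x"
      by (auto simp: tprod_def)
    then show "trop_eval f x + trop_eval g x \<le> y"
      using te_le[OF ff(1) st(1), of x] te_le[OF gg(1) st(2), of x] by (simp add: tev_add)
  next
    show "trop_eval f x + trop_eval g x \<in> (\<lambda>t. tev t x) ` tprod f g"
      using s0 t0 unfolding tprod_def
      by (intro image_eqI[where x="(fst s0 + fst t0, snd s0 + snd t0)"])
         (auto simp: tev_add intro!: image_eqI[where x="(s0,t0)"])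
  qed
qed

lemma tprod_hyp:
  assumes f: "tropical_polynomial f" and g: "tropical_polynomial g"
  shows "trop_hypersurface (tprod f g) = trop_hypersurface f \<union> trop_hypersurface g"
proof (rule set_eqI)
  fix x
  have ff: "finite f" "f \<noteq> {}" and gg: "finite g" "g \<noteq> {}" using f g by (auto simp: tropical_polynomial_def)
  obtain s0 where s0: "s0 \<in> f" "tev s0 x = trop_eval f x" using te_ex[OF ff] by blast
  obtain t0 where t0: "t0 \<in> g" "tev t0 x = trop_eval g x" using te_ex[OF gg] by blast
  have E: "trop_eval (tprod f g) x = trop_eval f x + trop_eval g x" by (rule tprod_eval[OF f g])
  have act: "tev (fst s + fst t, snd s + snd t) x = trop_eval (tprod f g) x \<longleftrightarrow>
     tev s x = trop_eval f x \<and> tev t x = trop_eval g x" if "s \<in> f" "t \<in> g" for s t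
    using te_le[OF ff(1) that(1), of x] te_le[OF gg(1) that(2), of x] by (simp add: E tev_add) (smt (verit))
  have mem: "u \<in> tprod f g \<longleftrightarrow> (\<exists>s\<in>f. \<exists>t\<in>g. u = (fst s + fst t, snd s + snd t))" for u
    by (auto simp: tprod_def)
  show "x \<in> trop_hypersurface (tprod f g) \<longleftrightarrow> x \<in> trop_hypersurface f \<union> trop_hypersurface g"
    unfolding Un_iff char[OF tprod_poly[OF f g]] char[OF f] char[OF g]
  proof
    assume "\<exists>u\<in>tprod f g. \<exists>v\<in>tprod f g. tev u x = trop_eval (tprod f g) x \<and> tev v x = trop_eval (tprod f g) x \<and> fst u \<noteq> fst v"
    then obtain u v where uv: "u \<in> tprod f g" "v \<in> tprod f g" "tev u x = trop_eval (tprod f g) x"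
        "tev v x = trop_eval (tprod f g) x" "fst u \<noteq> fst v" by blast
    obtain s1 t1 where 1: "s1 \<in> f" "t1 \<in> g" "u = (fst s1 + fst t1, snd s1 + snd t1)" using uv(1) mem by blast
    obtain s2 t2 where 2: "s2 \<in> f" "t2 \<in> g" "v = (fst s2 + fst t2, snd s2 + snd t2)" using uv(2) mem by blast
    have st: "s1 \<in> f" "t1 \<in> g" "s2 \<in> f" "t2 \<in> g"
      "tev (fst s1 + fst t1, snd s1 + snd t1) x = trop_eval (tprod f g) x"
      "tev (fst s2 + fst t2, snd s2 + snd t2) x = trop_eval (tprod f g) x"
      "fst s1 + fst t1 \<noteq> fst s2 + fst t2"
      using uv 1 2 by auto
    then show "(\<exists>s\<in>f. \<exists>t\<in>f. tev s x = trop_eval f x \<and> tev t x = trop_eval f x \<and> fst s \<noteq> fst t) \<or>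
      (\<exists>s\<in>g. \<exists>t\<in>g. tev s x = trop_eval g x \<and> tev t x = trop_eval g x \<and> fst s \<noteq> fst t)"
      using act[OF st(1,2)] act[OF st(3,4)] by metis
  next
    assume "(\<exists>s\<in>f. \<exists>t\<in>f. tev s x = trop_eval f x \<and> tev t x = trop_eval f x \<and> fst s \<noteq> fst t) \<or>
      (\<exists>s\<in>g. \<exists>t\<in>g. tev s x = trop_eval g x \<and> tev t x = trop_eval g x \<and> fst s \<noteq> fst t)"
    then show "\<exists>u\<in>tprod f g. \<exists>v\<in>tprod f g. tev u x = trop_eval (tprod f g) x \<and> tev v x = trop_eval (tprod f g) x \<and> fst u \<noteq> fst v"
    proof
      assume "\<exists>s\<in>f. \<exists>t\<in>f. tev s x = trop_eval f x \<and> tev t x = trop_eval f x \<and> fst s \<noteq> fst t"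
      then obtain s1 s2 where s: "s1 \<in> f" "s2 \<in> f" "tev s1 x = trop_eval f x" "tev s2 x = trop_eval f x" "fst s1 \<noteq> fst s2" by blast
      show ?thesis
        apply (rule bexI[where x="(fst s1 + fst t0, snd s1 + snd t0)"])
         apply (rule bexI[where x="(fst s2 + fst t0, snd s2 + snd t0)"])
        using s t0 act[OF s(1) t0(1)] act[OF s(2) t0(1)] by (auto simp: mem)
    next
      assume "\<exists>s\<in>g. \<exists>t\<in>g. tev s x = trop_eval g x \<and> tev t x = trop_eval g x \<and> fst s \<noteq> fst t"
      then obtain t1 t2 where t: "t1 \<in> g" "t2 \<in> g" "tev t1 x = trop_eval g x" "tev t2 x = trop_eval g x" "fst t1 \<noteq> fst t2" by blast
      show ?thesis
        apply (rule bexI[where x="(fst s0 + fst t1, snd s0 + snd t1)"])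
         apply (rule bexI[where x="(fst s0 + fst t2, snd s0 + snd t2)"])
        using t s0 act[OF s0(1) t(1)] act[OF s0(1) t(2)] by (auto simp: mem)
    qed
  qed
qed

lemma prevar_union:
  assumes "tropical_prevariety A" "tropical_prevariety B"
  shows "tropical_prevariety (A \<union> B)"
proof -
  obtain FA where FA: "finite FA" "\<forall>T\<in>FA. tropical_polynomial T" "A = (\<Inter>T\<in>FA. trop_hypersurface T)"
    using assms(1) by (auto simp: tropical_prevariety_def)
  obtain FB where FB: "finite FB" "\<forall>T\<in>FB. tropical_polynomial T" "B = (\<Inter>T\<in>FB. trop_hypersurface T)"
    using assms(2) by (auto simp: tropical_prevariety_def)
  let ?F = "(\<lambda>(f,g). tprod f g) ` (FA \<times> FB)"
  have "(\<Inter>T\<in>?F. trop_hypersurface T) = (\<Inter>p\<in>FA \<times> FB. trop_hypersurface (fst p) \<union> trop_hypersurface (snd p))"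
    using FA(2) FB(2) by (auto simp: tprod_hyp)
  also have "\<dots> = A \<union> B" unfolding FA(3) FB(3) by auto
  finally show ?thesis unfolding tropical_prevariety_def
    using FA FB by (intro exI[of _ ?F]) (auto intro: tprod_poly)
qed

definition vi :: "int^'n \<Rightarrow> real^'n" where "vi c = (\<chi> i. of_int (c $ i))"

lemma sum_vi: "(\<Sum>i\<in>UNIV. of_int (a $ i) * x $ i) = vi a \<bullet> x"
  by (simp add: vi_def inner_vec_def)

lemma vi_neg: "vi (- a) = - vi a"
  by (simp add: vi_def vec_eq_iff)

lemma vi_zero: "vi 0 = 0"
  by (simp add: vi_def vec_eq_iff)

lemma repr:
  assumes "rational_polyhedron P"
  shows "\<exists>R. finite R \<and> P = {x. \<forall>r\<in>R. vi (fst r) \<bullet> x \<le> of_int (snd r)}"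
proof -
  obtain E I :: "((int ^ 'a) \<times> int) set" where EI: "finite E" "finite I"
    "P = {x. (\<forall>(a, b) \<in> E. (\<Sum>i\<in>UNIV. of_int (a $ i) * x $ i) = of_int b) \<and>
                (\<forall>(a, b) \<in> I. (\<Sum>i\<in>UNIV. of_int (a $ i) * x $ i) \<le> of_int b)}"
    using assms unfolding rational_polyhedron_def by blast
  let ?R = "I \<union> E \<union> (\<lambda>r. (- fst r, - snd r)) ` E"
  have "P = {x. \<forall>r\<in>?R. vi (fst r) \<bullet> x \<le> of_int (snd r)}"
  proof (rule set_eqI)
    fix x
    show "x \<in> P \<longleftrightarrow> x \<in> {x. \<forall>r\<in>?R. vi (fst r) \<bullet> x \<le> of_int (snd r)}"
    proof
      assume xP: "x \<in> P"
      have hE0: "\<forall>(a, b) \<in> E. vi a \<bullet> x = of_int b" and hI0: "\<forall>(a, b) \<in> I. vi a \<bullet> x \<le> of_int b"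
        using xP unfolding EI(3) sum_vi by auto
      have hE: "vi a \<bullet> x = of_int b" if "(a,b) \<in> E" for a b
        using hE0 that by auto
      have hI: "vi a \<bullet> x \<le> of_int b" if "(a,b) \<in> I" for a b
        using hI0 that by auto
      show "x \<in> {x. \<forall>r\<in>?R. vi (fst r) \<bullet> x \<le> of_int (snd r)}"
      proof (intro CollectI ballI)
        fix r assume "r \<in> ?R"
        then consider "r \<in> I" | "r \<in> E" | r' where "r' \<in> E" "r = (- fst r', - snd r')" by auto
        then show "vi (fst r) \<bullet> x \<le> of_int (snd r)"
        proof cases
          case 1 then show ?thesis using hI[of "fst r" "snd r"] by simp
        next
          case 2 then show ?thesis using hE[of "fst r" "snd r"] by simp
        next
          case 3 then show ?thesis using hE[of "fst r'" "snd r'"] by (simp add: vi_neg)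
        qed
      qed
    next
      assume H: "x \<in> {x. \<forall>r\<in>?R. vi (fst r) \<bullet> x \<le> of_int (snd r)}"
      have E1: "vi a \<bullet> x = of_int b" if "(a,b) \<in> E" for a b
      proof -
        have "(a, b) \<in> ?R" using that by blast
        then have "vi (fst (a, b)) \<bullet> x \<le> of_int (snd (a, b))" using H by blast
        then have "vi a \<bullet> x \<le> of_int b" by simp
        moreover have "(- a, - b) \<in> ?R" using that by force
        then have "vi (fst (- a, - b)) \<bullet> x \<le> of_int (snd (- a, - b))" using H by blast
        then have "vi (- a) \<bullet> x \<le> of_int (- b)" by simp
        ultimately show ?thesis by (simp add: vi_neg)
      qed
      have I1: "vi a \<bullet> x \<le> of_int b" if "(a,b) \<in> I" for a b
      proof -
        have "(a, b) \<in> ?R" using that by blast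
        then have "vi (fst (a, b)) \<bullet> x \<le> of_int (snd (a, b))" using H by blast
        then show ?thesis by simp
      qed
      show "x \<in> P" unfolding EI(3) sum_vi using E1 I1 by (auto simp: case_prod_beta)
    qed
  qed
  moreover have "finite ?R" using EI by auto
  ultimately show ?thesis by (intro exI[of _ ?R]) simp
qed

lemma strict_pt:
  assumes P: "P = {x. \<forall>r\<in>R. vi (fst r) \<bullet> x \<le> of_int (snd r)}" "P \<noteq> {}"
    and fin: "finite J"
    and J: "\<forall>r\<in>J. \<exists>x\<in>P. vi (fst r) \<bullet> x < of_int (snd r)" and sub: "J \<subseteq> R"
  shows "\<exists>z\<in>P. \<forall>r\<in>J. vi (fst r) \<bullet> z < of_int (snd r)"
  using fin J sub
proof (induction J rule: finite_induct)
  case empty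
  then show ?case using P(2) by auto
next
  case (insert r J)
  obtain z where z: "z \<in> P" "\<forall>r\<in>J. vi (fst r) \<bullet> z < of_int (snd r)" using insert by auto
  obtain y where y: "y \<in> P" "vi (fst r) \<bullet> y < of_int (snd r)" using insert by auto
  define m where "m = (1/2) *\<^sub>R (z + y)"
  have mv: "vi a \<bullet> m = (vi a \<bullet> z + vi a \<bullet> y) / 2" for a
    by (simp add: m_def inner_add_right)
  have "m \<in> P" unfolding P(1)
  proof (intro CollectI ballI)
    fix r assume "r \<in> R"
    then have "vi (fst r) \<bullet> z \<le> of_int (snd r)" "vi (fst r) \<bullet> y \<le> of_int (snd r)"
      using z(1) y(1) P(1) by auto
    then show "vi (fst r) \<bullet> m \<le> of_int (snd r)" unfolding mv by (simp add: field_simps)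
  qed
  moreover have "\<forall>r'\<in>insert r J. vi (fst r') \<bullet> m < of_int (snd r')"
  proof
    fix r' assume r': "r' \<in> insert r J"
    have le: "vi (fst r') \<bullet> z \<le> of_int (snd r')" "vi (fst r') \<bullet> y \<le> of_int (snd r')"
      using z(1) y(1) r' insert.prems(2) unfolding P(1) by auto
    have "vi (fst r') \<bullet> z < of_int (snd r') \<or> vi (fst r') \<bullet> y < of_int (snd r')"
      using r' z(2) y(2) by auto
    then show "vi (fst r') \<bullet> m < of_int (snd r')" unfolding mv using le by (auto simp: field_simps)
  qed
  ultimately show ?case by blast
qed

lemma hyper:
  fixes P :: "(real^'n) set"
  assumes P: "P = {x. \<forall>r\<in>R. vi (fst r) \<bullet> x \<le> of_int (snd r)}" and fin: "finite R"
    and ne: "P \<noteq> {}" and ad: "aff_dim P < int CARD('n)"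
  shows "\<exists>r\<in>R. fst r \<noteq> 0 \<and> (\<forall>x\<in>P. vi (fst r) \<bullet> x = of_int (snd r))"
proof (rule ccontr)
  assume nc: "\<not> ?thesis"
  let ?J = "{r\<in>R. fst r \<noteq> 0}"
  have "\<forall>r\<in>?J. \<exists>x\<in>P. vi (fst r) \<bullet> x < of_int (snd r)"
  proof
    fix r assume r: "r \<in> ?J"
    then obtain x where "x \<in> P" "vi (fst r) \<bullet> x \<noteq> of_int (snd r)" using nc by blast
    moreover have "vi (fst r) \<bullet> x \<le> of_int (snd r)" using calculation(1) r P by auto
    ultimately show "\<exists>x\<in>P. vi (fst r) \<bullet> x < of_int (snd r)" by force
  qed
  then obtain z where z: "z \<in> P" "\<forall>r\<in>?J. vi (fst r) \<bullet> z < of_int (snd r)"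
    using strict_pt[OF P ne, of ?J] fin by auto
  have ev: "\<forall>\<^sub>F y in nhds z. vi (fst r) \<bullet> y < of_int (snd r)" if r: "r \<in> ?J" for r
  proof -
    have "((\<lambda>y. vi (fst r) \<bullet> y) \<longlongrightarrow> vi (fst r) \<bullet> z) (nhds z)"
      by (intro tendsto_intros filterlim_ident)
    then show ?thesis using z(2) r by (intro order_tendstoD(2)) auto
  qed
  have "\<forall>\<^sub>F y in nhds z. \<forall>r\<in>?J. vi (fst r) \<bullet> y < of_int (snd r)"
    using ev fin by (intro eventually_ball_finite) auto
  then have "\<forall>\<^sub>F y in nhds z. y \<in> P"
  proof eventually_elim
    case (elim y)
    show ?case unfolding P
    proof (intro CollectI ballI)
      fix r assume r: "r \<in> R"
      show "vi (fst r) \<bullet> y \<le> of_int (snd r)"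
      proof (cases "fst r = 0")
        case True
        have "vi (fst r) \<bullet> z \<le> of_int (snd r)" using z(1) r P by auto
        then show ?thesis using True by (simp add: vi_zero)
      next
        case False
        then have "vi (fst r) \<bullet> y < of_int (snd r)" using elim r by blast
        then show ?thesis by simp
      qed
    qed
  qed
  then obtain S where S: "open S" "z \<in> S" "\<forall>y\<in>S. y \<in> P" unfolding eventually_nhds by blast
  have "aff_dim S = int DIM(real^'n)" using S by (intro aff_dim_open) auto
  moreover have "aff_dim S \<le> aff_dim P" using S by (intro aff_dim_subset) auto
  ultimately show False using ad by simp
qed

definition cp :: "int^'n \<Rightarrow> nat^'n" where "cp c = (\<chi> i. nat (c $ i))"
definition cm :: "int^'n \<Rightarrow> nat^'n" where "cm c = (\<chi> i. nat (- (c $ i)))"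

lemma cpm: "va (cp c) - va (cm c) = vi c"
proof -
  have "real (nat k) - real (nat (- k)) = real_of_int k" for k :: int by (cases "k \<ge> 0") auto
  then show ?thesis by (simp add: va_def cp_def cm_def vi_def vec_eq_iff)
qed

lemma cp_ne: "c \<noteq> 0 \<Longrightarrow> cp c \<noteq> cm c"
proof
  assume "c \<noteq> 0" "cp c = cm c"
  then have h: "nat (c $ i) = nat (- (c $ i))" for i by (metis cm_def cp_def vec_lambda_beta)
  have k: "k = 0" if "nat k = nat (- k)" for k :: int using that by (cases "k \<ge> 0") auto
  have "c $ i = 0" for i using k[OF h[of i]] .
  then have "c = 0" by (simp add: vec_eq_iff)
  then show False using \<open>c \<noteq> 0\<close> by simp
qed

lemma tev_eq: "tev (a + b, e) x = va a \<bullet> x + va b \<bullet> x + e"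
  by (simp add: tev_def va_add inner_add_left)

lemma hyp_g:
  fixes c :: "int^'n"
  assumes c: "c \<noteq> 0"
  shows "trop_hypersurface {(cp c, 0::real), (cm c, of_int d)} = {x. vi c \<bullet> x = of_int d}"
proof (rule set_eqI)
  fix x
  let ?g = "{(cp c, 0), (cm c, of_int d)} :: ((nat^'n) \<times> real) set"
  have tp: "tropical_polynomial ?g" by (simp add: tropical_polynomial_def)
  have e1: "tev (cp c, 0) x = va (cp c) \<bullet> x" and e2: "tev (cm c, of_int d) x = va (cm c) \<bullet> x + of_int d"
    by (simp_all add: tev_def)
  have te: "trop_eval ?g x = min (va (cp c) \<bullet> x) (va (cm c) \<bullet> x + of_int d)"
    unfolding trop_eval_tev by (simp add: e1 e2)
  have diff: "vi c \<bullet> x = va (cp c) \<bullet> x - va (cm c) \<bullet> x" by (simp flip: cpm add: inner_diff_left)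
  have ne: "cp c \<noteq> cm c" using cp_ne[OF c] .
  show "x \<in> trop_hypersurface ?g \<longleftrightarrow> x \<in> {x. vi c \<bullet> x = of_int d}"
    unfolding char[OF tp] using ne by (auto simp: te e1 e2 diff)
qed

definition fr :: "int^'n \<Rightarrow> int \<Rightarrow> ((int^'n) \<times> int) \<Rightarrow> ((nat^'n) \<times> real) set" where
  "fr c d r = {(cp c + cp (fst r), 0), (cm c + cp (fst r), of_int d), (cp c + cm (fst r), of_int (snd r))}"

lemma hyp_fr:
  assumes c: "c \<noteq> 0" and x: "vi c \<bullet> x = of_int d"
  shows "x \<in> trop_hypersurface (fr c d r) \<longleftrightarrow> vi (fst r) \<bullet> x \<le> of_int (snd r)"
proof -
  let ?f = "fr c d r"
  have tp: "tropical_polynomial ?f" by (simp add: tropical_polynomial_def fr_def)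
  define P where "P = va (cp c) \<bullet> x"
  define M where "M = va (cm c) \<bullet> x"
  define AP where "AP = va (cp (fst r)) \<bullet> x"
  define AM where "AM = va (cm (fst r)) \<bullet> x"
  have PM: "P - M = of_int d" using x unfolding P_def M_def by (simp flip: cpm add: inner_diff_left)
  have AA: "AP - AM = vi (fst r) \<bullet> x" unfolding AP_def AM_def by (simp flip: cpm add: inner_diff_left)
  let ?L1 = "(cp c + cp (fst r), 0::real)"
  let ?L2 = "(cm c + cp (fst r), real_of_int d)"
  let ?L3 = "(cp c + cm (fst r), real_of_int (snd r))"
  have v1: "tev ?L1 x = P + AP" and v2: "tev ?L2 x = M + AP + of_int d" and v3: "tev ?L3 x = P + AM + of_int (snd r)"
    unfolding tev_eq P_def M_def AP_def AM_def by simp_all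
  have te: "trop_eval ?f x = min (P + AP) (min (M + AP + of_int d) (P + AM + of_int (snd r)))"
    unfolding trop_eval_tev fr_def by (simp add: v1 v2 v3)
  have ne: "fst ?L1 \<noteq> fst ?L2" using cp_ne[OF c] by simp
  show ?thesis
  proof
    assume "x \<in> trop_hypersurface ?f"
    then obtain s t where st: "s \<in> ?f" "t \<in> ?f" "tev s x = trop_eval ?f x" "tev t x = trop_eval ?f x" "fst s \<noteq> fst t"
      unfolding char[OF tp] by blast
    show "vi (fst r) \<bullet> x \<le> of_int (snd r)"
    proof (rule ccontr)
      assume "\<not> ?thesis"
      then have lt: "P + AM + of_int (snd r) < P + AP" using AA by simp
      have mem: "u = ?L1 \<or> u = ?L2 \<or> u = ?L3" if "u \<in> ?f" for u using that by (simp add: fr_def)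
      have "s = ?L3"
      proof (rule ccontr)
        assume "s \<noteq> ?L3"
        then have "s = ?L1 \<or> s = ?L2" using mem[OF st(1)] by blast
        then show False using st(3) lt PM unfolding te by (auto simp: v1 v2)
      qed
      moreover have "t = ?L3"
      proof (rule ccontr)
        assume "t \<noteq> ?L3"
        then have "t = ?L1 \<or> t = ?L2" using mem[OF st(2)] by blast
        then show False using st(4) lt PM unfolding te by (auto simp: v1 v2)
      qed
      ultimately show False using st(5) by simp
    qed
  next
    assume "vi (fst r) \<bullet> x \<le> of_int (snd r)"
    then have le: "P + AP \<le> P + AM + of_int (snd r)" using AA by simp
    have "tev ?L1 x = trop_eval ?f x" "tev ?L2 x = trop_eval ?f x" using le PM by (simp_all add: te v1 v2 v3)
    moreover have "?L1 \<in> ?f" "?L2 \<in> ?f" by (simp_all add: fr_def)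
    ultimately show "x \<in> trop_hypersurface ?f" unfolding char[OF tp] using ne by blast
  qed
qed

lemma poly_prev:
  fixes P :: "(real^'n) set"
  assumes "rational_polyhedron P" "aff_dim P < int CARD('n)"
  shows "tropical_prevariety P"
proof (cases "P = {}")
  case True
  have tp: "tropical_polynomial {(0::nat^'n, 0::real)}" by (simp add: tropical_polynomial_def)
  have "trop_hypersurface {(0::nat^'n, 0::real)} = {}" using char[OF tp] by auto
  then show ?thesis using True tp unfolding tropical_prevariety_def
    by (intro exI[of _ "{{(0::nat^'n, 0::real)}}"]) auto
next
  case False
  obtain R where R: "finite R" "P = {x. \<forall>r\<in>R. vi (fst r) \<bullet> x \<le> of_int (snd r)}"
    using repr[OF assms(1)] by blast
  obtain r0 where r0: "r0 \<in> R" "fst r0 \<noteq> 0" "\<forall>x\<in>P. vi (fst r0) \<bullet> x = of_int (snd r0)"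
    using hyper[OF R(2) R(1) False assms(2)] by blast
  define c where "c = fst r0"
  define d where "d = snd r0"
  have c: "c \<noteq> 0" using r0 c_def by simp
  let ?F = "insert {(cp c, 0), (cm c, of_int d)} (fr c d ` R)"
  have "(\<Inter>T\<in>?F. trop_hypersurface T) = P"
  proof (rule set_eqI)
    fix x
    show "x \<in> (\<Inter>T\<in>?F. trop_hypersurface T) \<longleftrightarrow> x \<in> P"
    proof
      assume "x \<in> (\<Inter>T\<in>?F. trop_hypersurface T)"
      then have hx: "vi c \<bullet> x = of_int d" and hr: "\<forall>r\<in>R. x \<in> trop_hypersurface (fr c d r)"
        using hyp_g[OF c, of d] by auto
      show "x \<in> P" unfolding R(2) using hr hyp_fr[OF c hx] by auto
    next
      assume xP: "x \<in> P"
      then have hx: "vi c \<bullet> x = of_int d" using r0 c_def d_def by auto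
      have "\<forall>r\<in>R. vi (fst r) \<bullet> x \<le> of_int (snd r)" using xP R(2) by auto
      then show "x \<in> (\<Inter>T\<in>?F. trop_hypersurface T)"
        using hyp_g[OF c, of d] hx hyp_fr[OF c hx] by auto
    qed
  qed
  moreover have "finite ?F" using R(1) by simp
  moreover have "\<forall>T\<in>?F. tropical_polynomial T" by (auto simp: tropical_polynomial_def fr_def)
  ultimately show ?thesis unfolding tropical_prevariety_def by blast
qed

theorem corollary1p2:
  fixes \<P> :: "(real ^ 'n) set set"
  assumes "finite \<P>"
    and "\<And>P. P \<in> \<P> \<Longrightarrow> rational_polyhedron P"
    and "\<And>P. P \<in> \<P> \<Longrightarrow> aff_dim P < int CARD('n)"
  shows "tropical_prevariety (\<Union>\<P>)"
  using assms
proof (induction \<P> rule: finite_induct)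
  case empty
  have tp: "tropical_polynomial {(0::nat^'n, 0::real)}" by (simp add: tropical_polynomial_def)
  have "trop_hypersurface {(0::nat^'n, 0::real)} = {}" using char[OF tp] by auto
  then show ?case using tp unfolding tropical_prevariety_def
    by (intro exI[of _ "{{(0::nat^'n, 0::real)}}"]) auto
next
  case (insert P \<P>)
  then show ?case by (simp add: prevar_union poly_prev)
qed

end
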